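(* Let $R\ge1$, $\mathbf{x}$ a vector of pairwise distinct reals and $\mathbf{c}=(c_1,\dots,c_R)\in\mathbb{R}^R$ with $c_k\ne0$ for all $k$. Then the $R$ eigenvalues of $B(\mathbf{x},\mathbf{c})$ are pairwise distinct (each eigenvalue is simple).
   Context: $B(\mathbf{x},\mathbf{c})$ is the $R\times R$ matrix with entries $b_{m,m}=0$ and $b_{m,n}=\frac{c_mc_n}{x_m-x_n}$ for $m\ne n$. *)

theory Defs
  imports Jordan_Normal_Form.Char_Poly
begin

text \<open>The R x R matrix B(x,c), indices 0..R-1 (paper uses 1..R):
  diagonal entries 0, off-diagonal entries c_m c_n / (x_m - x_n).\<close>
definition Bmat :: "nat \<Rightarrow> (nat \<Rightarrow> real) \<Rightarrow> (nat \<Rightarrow> real) \<Rightarrow> real mat" where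
  "Bmat R x c = mat R R (\<lambda>(m, n). if m = n then 0 else c m * c n / (x m - x n))"

end

theory Submission
  imports Defs Jordan_Normal_Form.Jordan_Normal_Form_Uniqueness Jordan_Normal_Form.Jordan_Normal_Form_Existence
begin

hide_const (open) Coset.order

definition skewH :: "complex mat \<Rightarrow> nat \<Rightarrow> bool" where
  "skewH M n = (\<forall>i<n. \<forall>j<n. cnj (M $$ (j,i)) = - M $$ (i,j))"

lemma mult_vec_sum:
  assumes "M \<in> carrier_mat n n" "v \<in> carrier_vec n" "i < n"
  shows "(M *\<^sub>v v) $ i = (\<Sum>j<n. M $$ (i,j) * v $ j)"
  using assms by (simp add: scalar_prod_def atLeast0LessThan)

lemma skewH_adj:
  assumes M: "M \<in> carrier_mat n n" and sk: "skewH M n"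
    and u: "u \<in> carrier_vec n" and v: "v \<in> carrier_vec n"
  shows "(\<Sum>i<n. cnj (u$i) * (M *\<^sub>v v)$i) = - (\<Sum>i<n. cnj ((M *\<^sub>v u)$i) * v$i)"
proof -
  have L: "(\<Sum>i<n. cnj (u$i) * (M *\<^sub>v v)$i) = (\<Sum>i<n. \<Sum>j<n. cnj(u$i) * M$$(i,j) * v$j)"
    by (rule sum.cong[OF refl], subst mult_vec_sum[OF M v], simp, simp add: sum_distrib_left mult.assoc)
  have "(\<Sum>i<n. cnj ((M *\<^sub>v u)$i) * v$i) = (\<Sum>i<n. \<Sum>j<n. cnj(M$$(i,j)) * cnj(u$j) * v$i)"
    by (rule sum.cong[OF refl], subst mult_vec_sum[OF M u], simp, simp add: sum_distrib_right)
  also have "\<dots> = (\<Sum>j<n. \<Sum>i<n. cnj(M$$(i,j)) * cnj(u$j) * v$i)" by (rule sum.swap)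
  also have "\<dots> = (\<Sum>j<n. \<Sum>i<n. - (cnj(u$j) * M$$(j,i) * v$i))"
    using sk unfolding skewH_def by (intro sum.cong refl, simp)
  also have "\<dots> = - (\<Sum>i<n. \<Sum>j<n. cnj(u$i) * M$$(i,j) * v$j)"
    by (simp add: sum_negf)
  finally show ?thesis using L by simp
qed

lemma wnorm0:
  fixes v :: "complex vec"
  assumes "(\<Sum>i<n. of_real (w i) * (cnj (v$i) * v$i)) = 0" and "\<And>i. i < n \<Longrightarrow> w i > 0"
    and "i < n"
  shows "v $ i = 0"
proof -
  have eq: "(\<Sum>i<n. of_real (w i) * (cnj (v$i) * v$i)) = of_real (\<Sum>i<n. w i * (cmod (v$i))^2)"
  proof -
    have "\<And>z. cnj z * z = complex_of_real ((cmod z)^2)"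
      by (metis complex_norm_square norm_complex_def mult.commute)
    thus ?thesis by simp
  qed
  hence s: "(\<Sum>i<n. w i * (cmod (v$i))^2) = 0" using assms(1) of_real_eq_0_iff by metis
  have "\<forall>i\<in>{..<n}. w i * (cmod (v$i))^2 = 0"
    by (rule iffD1[OF sum_nonneg_eq_0_iff], simp, insert assms(2), force, rule s)
  hence "w i * (cmod (v$i))^2 = 0" using assms(3) by auto
  thus ?thesis using assms(2)[OF assms(3)] by simp
qed


lemma ker_pow:
  assumes M: "M \<in> carrier_mat n n" and sk: "skewH M n"
  shows "v \<in> carrier_vec n \<Longrightarrow> k \<ge> 1 \<Longrightarrow> (M ^\<^sub>m k) *\<^sub>v v = 0\<^sub>v n \<Longrightarrow> M *\<^sub>v v = 0\<^sub>v n"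
proof (induction k arbitrary: v)
  case 0
  then show ?case by simp
next
  case (Suc k)
  show ?case
  proof (cases "k = 0")
    case True
    then show ?thesis using Suc.prems M by simp
  next
    case False
    have Mv: "M *\<^sub>v v \<in> carrier_vec n" using M Suc.prems by simp
    have "(M ^\<^sub>m k) *\<^sub>v (M *\<^sub>v v) = 0\<^sub>v n"
      using Suc.prems M by (simp add: assoc_mult_mat_vec[symmetric, of _ n n _ n])
    hence MMv: "M *\<^sub>v (M *\<^sub>v v) = 0\<^sub>v n" using Suc.IH[OF Mv] False by simp
    define u where "u = M *\<^sub>v v"
    have "(\<Sum>i<n. cnj (u$i) * (M *\<^sub>v v)$i) = - (\<Sum>i<n. cnj ((M *\<^sub>v u)$i) * v$i)"
      by (rule skewH_adj[OF M sk], insert Mv Suc.prems, auto simp: u_def)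
    also have "\<dots> = 0" using MMv unfolding u_def by simp
    finally have S: "(\<Sum>i<n. of_real 1 * (cnj (u$i) * u$i)) = 0" unfolding u_def by simp
    have "\<And>i. i < n \<Longrightarrow> u $ i = 0" using wnorm0[where w="\<lambda>_. 1", OF S] by simp
    thus ?thesis using Mv M unfolding u_def by (intro eq_vecI, auto)
  qed
qed

definition Bc :: "nat \<Rightarrow> (nat \<Rightarrow> real) \<Rightarrow> (nat \<Rightarrow> real) \<Rightarrow> complex mat" where
  "Bc R x c = map_mat complex_of_real (Bmat R x c)"

lemma Bc_carrier: "Bc R x c \<in> carrier_mat R R"
  unfolding Bc_def Bmat_def by simp

lemma Bc_index: "i < R \<Longrightarrow> j < R \<Longrightarrow>
  Bc R x c $$ (i,j) = of_real (if i = j then 0 else c i * c j / (x i - x j))"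
  unfolding Bc_def Bmat_def by simp

lemma Bc_skew: "skewH (Bc R x c) R"
  unfolding skewH_def
proof (intro allI impI)
  fix i j assume "i < R" "j < R"
  have "c j * c i / (x j - x i) = - (c i * c j / (x i - x j))"
    by (metis minus_diff_eq minus_divide_right mult.commute)
  thus "cnj (Bc R x c $$ (j, i)) = - Bc R x c $$ (i, j)"
    using \<open>i < R\<close> \<open>j < R\<close> by (simp add: Bc_index)
qed

lemma ev_imag:
  assumes "eigenvalue (Bc R x c) a"
  shows "cnj a = - a"
proof -
  let ?A = "Bc R x c"
  obtain v where v: "v \<in> carrier_vec R" and v0: "v \<noteq> 0\<^sub>v R" and Av: "?A *\<^sub>v v = a \<cdot>\<^sub>v v"
    using assms Bc_carrier[of R x c] unfolding eigenvalue_def eigenvector_def by auto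
  have "(\<Sum>i<R. cnj (v$i) * (?A *\<^sub>v v)$i) = - (\<Sum>i<R. cnj ((?A *\<^sub>v v)$i) * v$i)"
    by (rule skewH_adj[OF Bc_carrier Bc_skew v v])
  hence "(\<Sum>i<R. cnj (v$i) * (a * v$i)) = - (\<Sum>i<R. cnj (a * v$i) * v$i)"
    unfolding Av using v by simp
  hence "a * (\<Sum>i<R. cnj (v$i) * v$i) = - cnj a * (\<Sum>i<R. cnj (v$i) * v$i)"
    by (simp add: sum_distrib_left sum_negf algebra_simps)
  hence eq: "(a + cnj a) * (\<Sum>i<R. cnj (v$i) * v$i) = 0" by (simp add: algebra_simps)
  have "(\<Sum>i<R. cnj (v$i) * v$i) \<noteq> 0"
  proof
    assume "(\<Sum>i<R. cnj (v$i) * v$i) = 0"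
    hence S: "(\<Sum>i<R. of_real 1 * (cnj (v$i) * v$i)) = 0" by simp
    have "\<And>i. i < R \<Longrightarrow> v $ i = 0" using wnorm0[where w="\<lambda>_. 1", OF S] by simp
    hence "v = 0\<^sub>v R" using v by (intro eq_vecI, auto)
    thus False using v0 by simp
  qed
  with eq have "a + cnj a = 0" by simp
  thus ?thesis by (metis add_eq_0_iff2 add.commute)
qed

lemma charmv:
  assumes A: "A \<in> carrier_mat n n" and w: "w \<in> carrier_vec n" and i: "i < n"
  shows "(char_matrix A a *\<^sub>v w) $ i = (\<Sum>j<n. A $$ (i,j) * w $ j) - a * w $ i"
proof -
  have "(char_matrix A a *\<^sub>v w) $ i = (\<Sum>j<n. char_matrix A a $$ (i,j) * w $ j)"
    by (rule mult_vec_sum[OF _ w i], insert A, simp)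
  also have "\<dots> = (\<Sum>j<n. A $$ (i,j) * w $ j - (if j = i then a * w $ i else 0))"
    using A i by (intro sum.cong refl, auto simp: char_matrix_def algebra_simps)
  also have "\<dots> = (\<Sum>j<n. A $$ (i,j) * w $ j) - a * w $ i"
    using i by (simp add: sum_subtractf)
  finally show ?thesis .
qed

lemma char_skew:
  assumes "cnj a = - a"
  shows "skewH (char_matrix (Bc R x c) a) R"
  unfolding skewH_def
proof (intro allI impI)
  fix i j assume i: "i < R" and j: "j < R"
  have "cnj (Bc R x c $$ (j, i)) = - Bc R x c $$ (i, j)" using Bc_skew[of R x c] i j
    unfolding skewH_def by blast
  thus "cnj (char_matrix (Bc R x c) a $$ (j, i)) = - char_matrix (Bc R x c) a $$ (i, j)"
    using i j Bc_carrier[of R x c] assms unfolding char_matrix_def by (cases "i = j", auto)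
qed


lemma kernel_dim_le1:
  fixes M :: "'a::field mat"
  assumes M: "M \<in> carrier_mat n n" and c: "c \<in> carrier_vec n"
  and inj: "\<And>v. v \<in> mat_kernel M \<Longrightarrow> c \<bullet> v = 0 \<Longrightarrow> v = 0\<^sub>v n"
  shows "kernel_dim M \<le> 1"
proof -
  interpret K: kernel n n M by (unfold_locales, rule M)
  obtain B where fin: "finite B" and bas: "K.basis B" using kernel_basis_exists[OF M] by blast
  have dimB: "K.dim = card B" by (rule K.Ker.dim_basis[OF fin bas])
  have li: "K.lin_indpt B" and Bsub: "B \<subseteq> mat_kernel M"
    using bas unfolding K.Ker.basis_def by auto
  have "card B \<le> 1"
  proof (rule ccontr)
    assume "\<not> card B \<le> 1"
    then obtain u w where u: "u \<in> B" and w: "w \<in> B" and uw: "u \<noteq> w"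
      using card_le_Suc0_iff_eq[OF fin] by (auto simp: One_nat_def)
    have uK: "u \<in> mat_kernel M" and wK: "w \<in> mat_kernel M" using u w Bsub by auto
    have uc: "u \<in> carrier_vec n" and wc: "w \<in> carrier_vec n" using uK wK mat_kernelD[OF M] by auto
    have u0: "u \<noteq> 0\<^sub>v n" using K.Ker.vs_zero_lin_dep[OF Bsub li] u by auto
    have cu: "c \<bullet> u \<noteq> 0" using inj[OF uK] u0 by auto
    define a where "a = (\<lambda>z. if z = u then c \<bullet> w else - (c \<bullet> u))"
    define z where "z = (c \<bullet> w) \<cdot>\<^sub>v u + (- (c \<bullet> u)) \<cdot>\<^sub>v w"
    have lc: "K.lincomb a ({w} \<union> {u}) = z"
    proof -
      have "K.lincomb a ({w} \<union> {u}) = (a u \<cdot>\<^sub>v u) + K.lincomb a {w}"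
        by (subst K.Ker.lincomb_insert, insert uK wK uw, auto)
      also have "K.lincomb a {w} = K.lincomb a ({} \<union> {w})" by simp
      also have "\<dots> = (a w \<cdot>\<^sub>v w) + K.lincomb a {}"
        by (subst K.Ker.lincomb_insert, insert uK wK uw, auto)
      also have "K.lincomb a {} = 0\<^sub>v n" unfolding K.Ker.lincomb_def by simp
      finally show ?thesis unfolding z_def a_def using uw uc wc by auto
    qed
    have zK: "z \<in> mat_kernel M" unfolding lc[symmetric]
      by (rule K.Ker.lincomb_closed, insert uK wK, auto)
    have "c \<bullet> z = (c \<bullet> w) * (c \<bullet> u) - (c \<bullet> u) * (c \<bullet> w)"
      unfolding z_def using c uc wc
      by (simp add: scalar_prod_add_distrib scalar_prod_smult_distrib)
    hence "c \<bullet> z = 0" by (simp add: mult.commute)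
    hence z0: "z = 0\<^sub>v n" using inj[OF zK] by auto
    have "K.lin_dep B"
      by (rule K.Ker.lin_dep_crit[of "{w} \<union> {u}" _ a w], insert u w uw cu lc z0, auto simp: a_def)
    with li show False by auto
  qed
  thus ?thesis using dimB M by simp
qed

lemma sum_skip:
  fixes f :: "nat \<Rightarrow> complex"
  assumes "i < n"
  shows "(\<Sum>j<n. if j = i then 0 else f j) = (\<Sum>j<n. f j) - f i"
proof -
  have "(\<Sum>j<n. f j) = (\<Sum>j<n. if j = i then f j else 0) + (\<Sum>j<n. if j = i then 0 else f j)"
  proof -
    have "(\<Sum>j<n. f j) = (\<Sum>j<n. (if j = i then f j else 0) + (if j = i then 0 else f j))"
      by (intro sum.cong) auto
    thus ?thesis by (simp only: sum.distrib)
  qed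
  also have "(\<Sum>j<n. if j = i then f j else 0) = f i" using assms by simp
  finally show ?thesis by simp
qed

lemma key:
  assumes inj: "inj_on x {..<R}" and cnz: "\<forall>k<R. c k \<noteq> 0" and a: "cnj a = - a"
    and v: "v \<in> carrier_vec R" and Mv: "char_matrix (Bc R x c) a *\<^sub>v v = 0\<^sub>v R"
    and cv: "(\<Sum>j<R. of_real (c j) * v $ j) = 0"
  shows "v = 0\<^sub>v R"
proof -
  let ?A = "Bc R x c"
  let ?M = "char_matrix ?A a"
  have A: "?A \<in> carrier_mat R R" by (rule Bc_carrier)
  have M: "?M \<in> carrier_mat R R" using A by simp
  define Dv where "Dv = vec R (\<lambda>i. of_real (x i) * v $ i)"
  have Dv: "Dv \<in> carrier_vec R" unfolding Dv_def by simp
  have h0: "\<And>i. i < R \<Longrightarrow> (\<Sum>j<R. ?A $$ (i,j) * v $ j) = a * v $ i"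
  proof -
    fix i assume i: "i < R"
    have "(?M *\<^sub>v v) $ i = 0" using Mv i by simp
    thus "(\<Sum>j<R. ?A $$ (i,j) * v $ j) = a * v $ i" using charmv[OF A v i] by simp
  qed
  have entry: "\<And>i j. i < R \<Longrightarrow> j < R \<Longrightarrow>
     ?A $$ (i,j) * (of_real (x j) - of_real (x i)) = (if j = i then 0 else - (of_real (c i) * of_real (c j)))"
  proof -
    fix i j assume i: "i < R" and j: "j < R"
    show "?A $$ (i,j) * (of_real (x j) - of_real (x i)) = (if j = i then 0 else - (of_real (c i) * of_real (c j)))"
    proof (cases "j = i")
      case True then show ?thesis using i by (simp add: Bc_index)
    next
      case False
      hence "x i \<noteq> x j" using inj i j unfolding inj_on_def by auto
      hence "c i * c j / (x i - x j) * (x j - x i) = - (c i * c j)"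
        by (simp add: field_simps)
      hence "complex_of_real (c i * c j / (x i - x j) * (x j - x i)) = complex_of_real (- (c i * c j))"
        by simp
      thus ?thesis using False i j by (simp add: Bc_index)
    qed
  qed
  have MDv: "\<And>i. i < R \<Longrightarrow> (?M *\<^sub>v Dv) $ i = of_real (c i ^ 2) * v $ i"
  proof -
    fix i assume i: "i < R"
    have "(?M *\<^sub>v Dv) $ i = (\<Sum>j<R. ?A $$ (i,j) * (of_real (x j) * v $ j)) - a * (of_real (x i) * v $ i)"
      using charmv[OF A Dv i, of a] i unfolding Dv_def by simp
    also have "a * (of_real (x i) * v $ i) = of_real (x i) * (\<Sum>j<R. ?A $$ (i,j) * v $ j)"
      using h0[OF i] by simp
    also have "(\<Sum>j<R. ?A $$ (i,j) * (of_real (x j) * v $ j)) - of_real (x i) * (\<Sum>j<R. ?A $$ (i,j) * v $ j)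
      = (\<Sum>j<R. (?A $$ (i,j) * (of_real (x j) - of_real (x i))) * v $ j)"
      by (simp add: sum_distrib_left sum_subtractf[symmetric] algebra_simps)
    also have "\<dots> = (\<Sum>j<R. if j = i then 0 else - (of_real (c i) * (of_real (c j) * v $ j)))"
      by (intro sum.cong refl, simp add: entry i)
    also have "\<dots> = - of_real (c i) * ((\<Sum>j<R. of_real (c j) * v $ j) - of_real (c i) * v $ i)"
      by (subst sum_skip[OF i], simp add: sum_negf sum_distrib_left algebra_simps)
    also have "\<dots> = of_real (c i ^ 2) * v $ i" using cv by (simp add: power2_eq_square)
    finally show "(?M *\<^sub>v Dv) $ i = of_real (c i ^ 2) * v $ i" .
  qed
  have "(\<Sum>i<R. cnj (v$i) * (?M *\<^sub>v Dv)$i) = - (\<Sum>i<R. cnj ((?M *\<^sub>v v)$i) * Dv$i)"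
    by (rule skewH_adj[OF M char_skew[OF a] v Dv])
  also have "\<dots> = 0" using Mv by simp
  finally have "(\<Sum>i<R. cnj (v$i) * (?M *\<^sub>v Dv)$i) = 0" .
  hence S: "(\<Sum>i<R. of_real (c i ^ 2) * (cnj (v$i) * v$i)) = 0"
    by (simp add: MDv algebra_simps)
  have "\<And>i. i < R \<Longrightarrow> v $ i = 0"
    by (rule wnorm0[OF S], insert cnz, auto)
  thus ?thesis using v by (intro eq_vecI, auto)
qed

theorem corollary1:
  fixes R :: nat and x c :: "nat \<Rightarrow> real"
  assumes "R \<ge> 1"
    and "inj_on x {..<R}"
    and "\<forall>k<R. c k \<noteq> 0"
  shows "\<forall>a :: complex. eigenvalue (map_mat complex_of_real (Bmat R x c)) a
           \<longrightarrow> order a (char_poly (map_mat complex_of_real (Bmat R x c))) = 1"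
proof (intro allI impI)
  fix a :: complex
  let ?A = "Bc R x c"
  assume "eigenvalue (map_mat complex_of_real (Bmat R x c)) a"
  hence ev: "eigenvalue ?A a" unfolding Bc_def .
  have A: "?A \<in> carrier_mat R R" by (rule Bc_carrier)
  have a: "cnj a = - a" by (rule ev_imag[OF ev])
  obtain as where cp: "char_poly ?A = (\<Prod>a\<leftarrow>as. [:- a, 1:])"
    using char_poly_factorized[OF A] by auto
  obtain n_as where jnf: "jordan_nf ?A n_as" using jordan_nf_exists[OF A cp] by auto
  define m where "m = order a (char_poly ?A)"
  have m_eq: "m = sum_list (map fst (filter (\<lambda>na. snd na = a) n_as))"
    unfolding m_def by (rule jordan_nf_order[OF jnf])
  have cp0: "char_poly ?A \<noteq> 0" using degree_monic_char_poly[OF A] by auto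
  have "poly (char_poly ?A) a = 0" using ev eigenvalue_root_char_poly[OF A] by simp
  hence m1: "m \<ge> 1" unfolding m_def using cp0 order_root by (metis less_one not_less)
  let ?L = "map fst (filter (\<lambda>na. snd na = a) n_as)"
  have fl: "[(n, e)\<leftarrow>n_as . e = a] = filter (\<lambda>na. snd na = a) n_as"
    by (induct n_as, auto)
  have "dim_gen_eigenspace ?A a m = (\<Sum> n \<leftarrow> ?L. min m n)"
    using dim_gen_eigenspace[OF jnf, of a m] unfolding fl .
  also have "map (\<lambda>n. min m n) ?L = ?L"
    by (rule map_idI, insert member_le_sum_list[of _ ?L], simp add: m_eq)
  hence "(\<Sum> n \<leftarrow> ?L. min m n) = sum_list ?L" by (simp only:)
  also have "\<dots> = m" using m_eq by simp
  finally have dg: "dim_gen_eigenspace ?A a m = m" .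
  define cv where "cv = vec R (\<lambda>i. complex_of_real (c i))"
  have "kernel_dim (char_matrix ?A a ^\<^sub>m m) \<le> 1"
  proof (rule kernel_dim_le1[of _ R cv])
    show "char_matrix ?A a ^\<^sub>m m \<in> carrier_mat R R" using A by simp
    show "cv \<in> carrier_vec R" unfolding cv_def by simp
    fix v assume vK: "v \<in> mat_kernel (char_matrix ?A a ^\<^sub>m m)" and cv0: "cv \<bullet> v = 0"
    have v: "v \<in> carrier_vec R" and pv: "(char_matrix ?A a ^\<^sub>m m) *\<^sub>v v = 0\<^sub>v R"
      using mat_kernelD[OF _ vK, of R R] A by auto
    have Mv: "char_matrix ?A a *\<^sub>v v = 0\<^sub>v R"
      by (rule ker_pow[OF _ char_skew[OF a] v m1 pv], insert A, simp)
    have cs: "(\<Sum>j<R. of_real (c j) * v $ j) = 0"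
      using cv0 v unfolding cv_def by (simp add: scalar_prod_def atLeast0LessThan)
    show "v = 0\<^sub>v R" by (rule key[OF assms(2,3) a v Mv cs])
  qed
  hence "m \<le> 1" using dg unfolding dim_gen_eigenspace_def by simp
  thus "order a (char_poly (map_mat complex_of_real (Bmat R x c))) = 1"
    using m1 unfolding m_def Bc_def by simp
qed

end
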